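(* Let $n\ge 3$ and let $C_n$ be the cycle on vertex set $[n]$ with edges $\{i,i+1\}$ for $1\le i\le n-1$ and $\{1,n\}$ (the standard labeling). Then for every positive integer $t$, the independence complex $\Delta(C_n)$ is $t$-sortable with respect to this labeling, i.e. for all independent sets $A,B$ of $C_n$ with $|A|=|B|=t$, both components of $\mathrm{sort}(A,B)$ are independent sets of $C_n$.
   Context: The independence complex $\Delta(G)$ is the simplicial complex of independent sets of $G$. For finite $F,G\subset\mathbb{N}$ with $|F|=r,|G|=s$, write $\mathbf{x}^F\mathbf{x}^G=x_{i_1}\cdots x_{i_{r+s}}$ with $i_1\le\cdots\le i_{r+s}$ (where $\mathbf{x}^F=\prod_{i\in F}x_i$) and set $\mathrm{sort}(F,G)=(\{i_k:k\text{ odd}\},\{i_k:k\text{ even}\})$. A simplicial complex $\Delta$ with $V(\Delta)\subset\mathbb{N}$ is $t$-sortable with respect to the given labeling if $\mathrm{sort}(F,G)\in\Delta\times\Delta$ for all $F,G\in\Delta$ with $|F|=|G|=t$. *)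

theory Defs
  imports Main
begin

definition independence_complex :: "nat set \<Rightarrow> nat set set \<Rightarrow> nat set set" where
  "independence_complex V E = {S. S \<subseteq> V \<and> (\<forall>e\<in>E. \<not> e \<subseteq> S)}"

definition cycle_vertices :: "nat \<Rightarrow> nat set" where
  "cycle_vertices n = {1..n}"

definition cycle_edges :: "nat \<Rightarrow> nat set set" where
  "cycle_edges n = {{i, i + 1} | i. 1 \<le> i \<and> i \<le> n - 1} \<union> {{1, n}}"

text \<open>sort(F,G): sort the multiset union of F and G as i_1 <= ... <= i_{r+s};
  first component = entries at odd positions, second = entries at even positions
  (1-indexed), i.e. 0-indexed even / odd positions of the sorted list.\<close>
definition sort_merge :: "nat set \<Rightarrow> nat set \<Rightarrow> nat list" where
  "sort_merge F G = sort (sorted_list_of_set F @ sorted_list_of_set G)"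

definition sort_pair :: "nat set \<Rightarrow> nat set \<Rightarrow> nat set \<times> nat set" where
  "sort_pair F G =
     (let L = sort_merge F G in
       ({L ! k | k. k < length L \<and> even k}, {L ! k | k. k < length L \<and> odd k}))"

definition t_sortable :: "nat set set \<Rightarrow> nat \<Rightarrow> bool" where
  "t_sortable \<Delta> t \<longleftrightarrow>
     (\<forall>F\<in>\<Delta>. \<forall>G\<in>\<Delta>. card F = t \<and> card G = t \<longrightarrow> sort_pair F G \<in> \<Delta> \<times> \<Delta>)"

end

theory Submission
  imports Defs "HOL-Library.Multiset"
begin

lemma three_le:
  assumes "i<j" "j<l" "l < length L" "P (L!i)" "P (L!j)" "P (L!l)"
  shows "3 \<le> length (filter P L)"
proof -
  have sub: "{i,j,l} \<subseteq> {k. k<length L \<and> P (L!k)}" using assms by auto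
  have "card {i,j,l} = 3" using assms by auto
  moreover have "card {i,j,l} \<le> card {k. k<length L \<and> P (L!k)}"
    by (rule card_mono[OF _ sub]) auto
  ultimately show ?thesis by (simp add: length_filter_conv_card)
qed

lemma card_pair_le1:
  assumes "\<not> {a,b} \<subseteq> A" shows "card (A \<inter> {a,b}) \<le> 1"
proof -
  have "A \<inter> {a,b} \<subseteq> {a} \<or> A \<inter> {a,b} \<subseteq> {b}" using assms by auto
  then show ?thesis
  proof
    assume "A \<inter> {a,b} \<subseteq> {a}"
    then have "card (A \<inter> {a,b}) \<le> card {a}" by (intro card_mono) auto
    then show ?thesis by simp
  next
    assume "A \<inter> {a,b} \<subseteq> {b}"
    then have "card (A \<inter> {a,b}) \<le> card {b}" by (intro card_mono) auto
    then show ?thesis by simp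
  qed
qed

lemma filt_le2:
  assumes "finite A" "finite B" "card (A \<inter> {x. P x}) \<le> 1" "card (B \<inter> {x. P x}) \<le> 1"
  shows "length (filter P (sort_merge A B)) \<le> 2"
proof -
  let ?xs = "sorted_list_of_set A" and ?ys = "sorted_list_of_set B"
  have "length (filter P (sort_merge A B)) = size (mset (filter P (sort_merge A B)))" by (simp only: size_mset)
  also have "\<dots> = size (filter_mset P (mset ?xs + mset ?ys))"
    unfolding sort_merge_def by (simp only: mset_filter mset_sort mset_append)
  also have "\<dots> = length (filter P ?xs) + length (filter P ?ys)"
    by (simp flip: mset_filter)
  also have "length (filter P ?xs) = card (A \<inter> {x. P x})"
    using assms(1) by (simp add: distinct_card[symmetric] Int_def conj_commute)
  also have "length (filter P ?ys) = card (B \<inter> {x. P x})"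
    using assms(2) by (simp add: distinct_card[symmetric] Int_def conj_commute)
  finally show ?thesis using assms by simp
qed

theorem proposition1p11:
  fixes n t :: nat
  assumes "n \<ge> 3" and "t > 0"
  shows "t_sortable (independence_complex (cycle_vertices n) (cycle_edges n)) t"
  unfolding t_sortable_def
proof (intro ballI impI)
  let ?IC = "independence_complex (cycle_vertices n) (cycle_edges n)"
  fix A B assume A: "A \<in> ?IC" and B: "B \<in> ?IC" and cards: "card A = t \<and> card B = t"
  have AV: "A \<subseteq> {1..n}" and BV: "B \<subseteq> {1..n}"
    using A B by (auto simp: independence_complex_def cycle_vertices_def)
  have finA: "finite A" and finB: "finite B" using AV BV finite_subset by auto
  have edge1: "{1,n} \<in> cycle_edges n" by (simp add: cycle_edges_def)
  have edgev: "{v, v+1} \<in> cycle_edges n" if "1 \<le> v" "v+1 \<le> n" for v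
    using that unfolding cycle_edges_def by auto
  have indA: "\<not> e \<subseteq> A" if "e \<in> cycle_edges n" for e
    using A that by (auto simp: independence_complex_def)
  have indB: "\<not> e \<subseteq> B" if "e \<in> cycle_edges n" for e
    using B that by (auto simp: independence_complex_def)
  have noconsA: "\<not> {v, v+1} \<subseteq> A" for v
  proof
    assume h: "{v, v+1} \<subseteq> A"
    then have "1 \<le> v" "v+1 \<le> n" using AV by auto
    then show False using indA[OF edgev] h by blast
  qed
  have noconsB: "\<not> {v, v+1} \<subseteq> B" for v
  proof
    assume h: "{v, v+1} \<subseteq> B"
    then have "1 \<le> v" "v+1 \<le> n" using BV by auto
    then show False using indB[OF edgev] h by blast
  qed
  define L where "L = sort_merge A B"
  have sL: "sorted L" unfolding L_def sort_merge_def by simp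
  have setL: "set L = A \<union> B" unfolding L_def sort_merge_def using finA finB by simp
  have lenL: "length L = 2*t" unfolding L_def sort_merge_def using finA finB cards by simp
  have Lrange: "1 \<le> L!k \<and> L!k \<le> n" if "k < length L" for k
    using nth_mem[OF that] setL AV BV by auto
  have filt2: "length (filter (\<lambda>x. x = v \<or> x = v+1) L) \<le> 2" for v
  proof -
    have "{x. x = v \<or> x = v+1} = {v, v+1}" by auto
    then show ?thesis unfolding L_def
      using filt_le2[OF finA finB] card_pair_le1[OF noconsA] card_pair_le1[OF noconsB] by simp
  qed
  have filt1n: "length (filter (\<lambda>x. x = 1 \<or> x = n) L) \<le> 2"
  proof -
    have "{x. x = 1 \<or> x = n} = {1, n}" by auto
    then show ?thesis unfolding L_def
      using filt_le2[OF finA finB] card_pair_le1[OF indA[OF edge1]] card_pair_le1[OF indB[OF edge1]]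
      by simp
  qed
  have gap: "L!k + 2 \<le> L!(k+2)" if "k+2 < length L" for k
  proof (rule ccontr)
    assume "\<not> ?thesis"
    moreover have "L!k \<le> L!(k+1)" "L!(k+1) \<le> L!(k+2)"
      using sL that by (auto intro: sorted_nth_mono)
    ultimately have "3 \<le> length (filter (\<lambda>x. x = L!k \<or> x = L!k+1) L)"
      by (intro three_le[of k "k+1" "k+2"]) (use that in auto)
    then show False using filt2[of "L!k"] by simp
  qed
  have gap2: "L!k + 2 \<le> L!j" if "k < j" "j < length L" "even k = even j" for k j
  proof -
    have "k + 2 \<le> j" using that by presburger
    then have "L!(k+2) \<le> L!j" using sL that by (auto intro: sorted_nth_mono)
    then show ?thesis using gap[of k] \<open>k+2 \<le> j\<close> that by auto
  qed
  have first: "L!0 = 1" if "k < length L" "L!k = 1" for k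
    using Lrange[of 0] Lrange[of k] that sorted_nth_mono[OF sL, of 0 k] by (cases "L = []") auto
  have last: "L!(length L - 1) = n" if "k < length L" "L!k = n" for k
  proof -
    have "k \<le> length L - 1" "length L - 1 < length L" using that by auto
    then have "L!k \<le> L!(length L - 1)" using sorted_nth_mono[OF sL] by blast
    then show ?thesis using Lrange[of "length L - 1"] that by auto
  qed
  have par_ok: "S \<in> ?IC" if S: "S = {L ! k | k. k < length L \<and> even k = b}" for b S
  proof -
    have SV: "S \<subseteq> {1..n}" using S Lrange by auto
    have "\<not> e \<subseteq> S" if e: "e \<in> cycle_edges n" for e
    proof
      assume eS: "e \<subseteq> S"
      show False
      proof (cases "e = {1,n}")
        case True
        have m1: "1 \<in> S" and mn: "n \<in> S" using eS True by auto
        have "\<exists>k. L!k = 1 \<and> k < length L \<and> even k = b" using m1 unfolding S by auto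
        then obtain k where k: "L!k = 1" "k < length L" "even k = b" by blast
        have "\<exists>j. L!j = n \<and> j < length L \<and> even j = b" using mn unfolding S by auto
        then obtain j where j: "L!j = n" "j < length L" "even j = b" by blast
        note kj = k j
        have l0: "L!0 = 1" using first kj by blast
        have ll: "L!(length L - 1) = n" using last kj by blast
        have odd_last: "odd (length L - 1)" using lenL assms(2) by simp
        have "3 \<le> length (filter (\<lambda>x. x = 1 \<or> x = n) L)"
        proof (cases b)
          case True
          have "j \<noteq> 0"
          proof
            assume "j = 0"
            with kj l0 have "n = 1" by simp
            with assms(1) show False by simp
          qed
          moreover have "j \<noteq> length L - 1" using kj True odd_last by auto
          ultimately show ?thesis
            by (intro three_le[of 0 j "length L - 1"]) (use kj l0 ll in auto)
        next
          case False
          have "k \<noteq> 0" using kj False odd_pos by fastforce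
          moreover have "k \<noteq> length L - 1" using kj ll assms(1) by auto
          ultimately show ?thesis
            by (intro three_le[of 0 k "length L - 1"]) (use kj l0 ll in auto)
        qed
        then show False using filt1n by simp
      next
        case False
        then obtain v where ev: "e = {v, v+1}" using e unfolding cycle_edges_def by auto
        have m1: "v \<in> S" and mn: "v+1 \<in> S" using eS ev by auto
        have "\<exists>k. L!k = v \<and> k < length L \<and> even k = b" using m1 unfolding S by auto
        then obtain k where k: "L!k = v" "k < length L" "even k = b" by blast
        have "\<exists>j. L!j = v+1 \<and> j < length L \<and> even j = b" using mn unfolding S by auto
        then obtain j where j: "L!j = v+1" "j < length L" "even j = b" by blast
        note kj = k j
        have "k \<noteq> j" using kj by auto
        then show False
          using gap2[of k j] gap2[of j k] kj by (cases "k < j") auto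
      qed
    qed
    then show ?thesis using SV by (auto simp: independence_complex_def cycle_vertices_def)
  qed
  have e1: "{L ! k | k. k < length L \<and> even k} \<in> ?IC" using par_ok[of _ True] by simp
  have e2: "{L ! k | k. k < length L \<and> odd k} \<in> ?IC" using par_ok[of _ False] by simp
  show "sort_pair A B \<in> ?IC \<times> ?IC"
    unfolding sort_pair_def Let_def L_def[symmetric] using e1 e2 by simp
qed

end
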